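(* Let $n \geq 1$ and let \[ P(z,\bar z) = \sum_{j=0}^n \alpha_{j,n-j} z^j \bar z^{\,n-j} + P_{n-1}(z,\bar z) \] be a polyanalytic polynomial, where $\alpha_{j,n-j}\in\mathbb{C}$ and $P_{n-1}$ is a polyanalytic polynomial with $\deg(P_{n-1}) \leq n-1$. Suppose there exists $\ell \in \{0,1,\ldots,n\}$ with $2\ell \neq n$ such that \[ |\alpha_{\ell,n-\ell}| > \sum_{j=0,\, j\neq \ell}^n |\alpha_{j,n-j}|. \] Then $P$ has at least one zero in $\mathbb{C}$. In particular, every polyanalytic polynomial of the form $P(z,\bar z) = \alpha_{\ell,n-\ell} z^\ell \bar z^{\,n-\ell} + P_{n-1}(z,\bar z)$ with $n\geq 1$, $\alpha_{\ell,n-\ell}\neq 0$, $2\ell\neq n$ and $\deg(P_{n-1})\leq n-1$ has at least one zero.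
   Context: A polyanalytic polynomial is a function $\mathbb{C}\to\mathbb{C}$ of the form $P(z,\bar z)=\sum_{k=0}^n\sum_{j=0}^k \alpha_{j,k-j} z^j \bar z^{\,k-j}$ with complex coefficients $\alpha_{j,k-j}$ (i.e. a polynomial in $z$ and $\bar z$); two such polynomials are equal iff all coefficients agree. Its degree $\deg(P)$ is the largest $j+k$ such that the coefficient of $z^j\bar z^k$ is nonzero. A zero of $P$ is a point $z\in\mathbb{C}$ with $P(z,\bar z)=0$. *)

theory Defs
  imports Complex_Main
begin

text \<open>A polyanalytic polynomial is represented by its coefficient function
  a :: nat => nat => complex, where a j k is the coefficient of z^j (conj z)^k,
  with finite support.\<close>

definition pa_poly :: "(nat \<Rightarrow> nat \<Rightarrow> complex) \<Rightarrow> bool" where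
  "pa_poly a \<longleftrightarrow> finite {(j, k). a j k \<noteq> 0}"

definition pa_eval :: "(nat \<Rightarrow> nat \<Rightarrow> complex) \<Rightarrow> complex \<Rightarrow> complex" where
  "pa_eval a z = (\<Sum>(j, k)\<in>{(j, k). a j k \<noteq> 0}. a j k * z ^ j * cnj z ^ k)"

definition pa_deg_le :: "(nat \<Rightarrow> nat \<Rightarrow> complex) \<Rightarrow> nat \<Rightarrow> bool" where
  "pa_deg_le a d \<longleftrightarrow> (\<forall>j k. a j k \<noteq> 0 \<longrightarrow> j + k \<le> d)"

end

theory Submission
  imports Defs "HOL-Analysis.Analysis"
begin

lemma no_log_id_circle:
  assumes "continuous_on (sphere (0::complex) 1) g" "\<And>z. z \<in> sphere 0 1 \<Longrightarrow> z = exp (g z)"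
  shows False
proof -
  have "\<exists>g. continuous_on (sphere (0::complex) 1) g \<and> (\<forall>x \<in> sphere 0 1. id x = exp(g x))"
    using assms by auto
  then obtain a where h: "homotopic_with_canon (\<lambda>h. True) (sphere (0::complex) 1) (-{0}) id (\<lambda>t. a)"
    using inessential_eq_continuous_logarithm by blast
  have "homotopic_with_canon (\<lambda>h. True) (sphere (0::complex) 1) (sphere 0 1) ((\<lambda>z. z / of_real (norm z)) \<circ> id) ((\<lambda>z. z / of_real (norm z)) \<circ> (\<lambda>t. a))"
    by (rule homotopic_with_compose_continuous_left[OF h]) (auto intro!: continuous_intros simp: norm_divide)
  then have "homotopic_with_canon (\<lambda>h. True) (sphere (0::complex) 1) (sphere 0 1) id (\<lambda>t. a / of_real (norm a))"
    by (rule homotopic_with_eq) auto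
  then have "contractible (sphere (0::complex) 1)"
    unfolding contractible_def by blast
  then show False using contractible_sphere by force
qed

lemma no_log_pow_circle:
  assumes k: "k \<ge> 1" and "continuous_on (sphere (0::complex) 1) g" "\<And>z. z \<in> sphere 0 1 \<Longrightarrow> z ^ k = exp (g z)"
  shows False
proof -
  define f where "f z = exp (g z / of_nat k) / z" for z
  have cf: "continuous_on (sphere 0 1) f"
    unfolding f_def using k by (auto intro!: continuous_intros assms(2))
  have fk: "f z ^ k = 1" if "z \<in> sphere 0 1" for z
  proof -
    have "exp (g z / of_nat k) ^ k = exp (g z)"
      using k by (simp add: exp_of_nat_mult[symmetric])
    then show ?thesis using assms(3)[OF that] that
      by (auto simp: f_def power_divide)
  qed
  have "finite (f ` sphere 0 1)"
    by (rule finite_subset[OF _ finite_roots_unity[of k]]) (use fk k in auto)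
  then have "f constant_on sphere 0 1"
    by (intro continuous_finite_range_constant cf connected_sphere) auto
  then obtain c where c: "\<And>z. z \<in> sphere 0 1 \<Longrightarrow> f z = c"
    by (auto simp: constant_on_def)
  have c0: "c \<noteq> 0"
    using c[of 1] by (auto simp: f_def)
  show False
  proof (rule no_log_id_circle)
    show "continuous_on (sphere 0 1) (\<lambda>z. g z / of_nat k - Ln c)"
      using k by (auto intro!: continuous_intros assms(2))
    fix z :: complex assume z: "z \<in> sphere 0 1"
    have "z = exp (g z / of_nat k) / c"
      using c[OF z] z c0 by (auto simp: f_def field_simps)
    then show "z = exp (g z / of_nat k - Ln c)"
      using c0 by (simp add: exp_diff)
  qed
qed


lemma pa_eval_cont:
  shows "continuous_on UNIV (pa_eval Q)"
  unfolding pa_eval_def split_beta by (intro continuous_intros)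

lemma pa_eval_bound:
  assumes "pa_poly Q" "pa_deg_le Q d" "norm z \<ge> 1"
  shows "norm (pa_eval Q z) \<le> (\<Sum>p\<in>{(j, k). Q j k \<noteq> 0}. norm (Q (fst p) (snd p))) * norm z ^ d"
proof -
  have "norm (pa_eval Q z) \<le> (\<Sum>p\<in>{(j, k). Q j k \<noteq> 0}. norm (Q (fst p) (snd p) * z ^ fst p * cnj z ^ snd p))"
    unfolding pa_eval_def split_beta by (rule norm_sum)
  also have "\<dots> \<le> (\<Sum>p\<in>{(j, k). Q j k \<noteq> 0}. norm (Q (fst p) (snd p)) * norm z ^ d)"
  proof (rule sum_mono)
    fix p assume p: "p \<in> {(j, k). Q j k \<noteq> 0}"
    then have "fst p + snd p \<le> d" using assms(2) by (auto simp: pa_deg_le_def)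
    then have "norm z ^ (fst p + snd p) \<le> norm z ^ d"
      using assms(3) by (intro power_increasing) auto
    then show "norm (Q (fst p) (snd p) * z ^ fst p * cnj z ^ snd p) \<le> norm (Q (fst p) (snd p)) * norm z ^ d"
      by (simp add: norm_mult norm_power power_add mult.assoc mult_left_mono)
  qed
  also have "\<dots> = (\<Sum>p\<in>{(j, k). Q j k \<noteq> 0}. norm (Q (fst p) (snd p))) * norm z ^ d"
    by (simp add: sum_distrib_right)
  finally show ?thesis .
qed


theorem theorem2p5:
  fixes n l :: nat and \<alpha> :: "nat \<Rightarrow> complex" and Q :: "nat \<Rightarrow> nat \<Rightarrow> complex"
  assumes "n \<ge> 1"
    and "pa_poly Q" and "pa_deg_le Q (n - 1)"
    and "l \<le> n" and "2 * l \<noteq> n"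
    and "norm (\<alpha> l) > (\<Sum>j\<in>{0..n} - {l}. norm (\<alpha> j))"
  shows "\<exists>z::complex. (\<Sum>j=0..n. \<alpha> j * z ^ j * cnj z ^ (n - j)) + pa_eval Q z = 0"
proof (rule ccontr)
  define P where "P z = (\<Sum>j=0..n. \<alpha> j * z ^ j * cnj z ^ (n - j)) + pa_eval Q z" for z
  assume "\<not> ?thesis"
  then have P0: "P z \<noteq> 0" for z unfolding P_def by blast
  define A where "A = \<alpha> l"
  define S where "S = (\<Sum>j\<in>{0..n} - {l}. norm (\<alpha> j))"
  define C where "C = (\<Sum>p\<in>{(j, k). Q j k \<noteq> 0}. norm (Q (fst p) (snd p)))"
  define M where "M z = z ^ l * cnj z ^ (n - l)" for z :: complex
  define R where "R = max 1 (C / (norm A - S) + 1)"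
  have SA: "S < norm A" using assms(6) by (simp add: S_def A_def)
  have S0: "S \<ge> 0" unfolding S_def by (intro sum_nonneg) auto
  have A0: "A \<noteq> 0" using SA S0 by auto
  have R1: "R \<ge> 1" by (simp add: R_def)
  have CR: "C < (norm A - S) * R"
  proof -
    have "C / (norm A - S) < R" by (simp add: R_def)
    then show ?thesis using SA by (simp add: field_simps)
  qed
  have contP: "continuous_on UNIV P"
    unfolding P_def by (intro continuous_intros pa_eval_cont[of Q, THEN continuous_on_subset]) auto
  obtain g where contg: "continuous_on UNIV g" and g0: "\<And>z. z \<in> UNIV \<Longrightarrow> P z = exp (g z)"
    by (rule continuous_logarithm_on_contractible[OF contP contractible_UNIV P0]) blast
  have g: "P z = exp (g z)" for z using g0 by simp
  have Psplit: "P z = A * M z + ((\<Sum>j\<in>{0..n} - {l}. \<alpha> j * z ^ j * cnj z ^ (n - j)) + pa_eval Q z)" for z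
    unfolding P_def A_def M_def using assms(4)
    by (simp add: sum.remove[of "{0..n}" l])
  have Ebound: "norm (P z - A * M z) < norm (A * M z)" if z: "norm z = R" for z
  proof -
    have "norm (\<Sum>j\<in>{0..n} - {l}. \<alpha> j * z ^ j * cnj z ^ (n - j)) \<le> (\<Sum>j\<in>{0..n} - {l}. norm (\<alpha> j * z ^ j * cnj z ^ (n - j)))"
      by (rule norm_sum)
    also have "\<dots> = (\<Sum>j\<in>{0..n} - {l}. norm (\<alpha> j) * R ^ n)"
      by (intro sum.cong refl) (auto simp: norm_mult norm_power z power_add[symmetric])
    also have "\<dots> = S * R ^ n" by (simp add: S_def sum_distrib_right)
    finally have 1: "norm (\<Sum>j\<in>{0..n} - {l}. \<alpha> j * z ^ j * cnj z ^ (n - j)) \<le> S * R ^ n" .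
    have 2: "norm (pa_eval Q z) \<le> C * R ^ (n - 1)"
      using pa_eval_bound[OF assms(2,3), of z] z R1 by (simp add: C_def)
    have Rn: "R ^ n = R * R ^ (n - 1)" using assms(1)
      by (metis Suc_diff_le diff_Suc_1 power_Suc)
    have 3: "C * R ^ (n - 1) < (norm A - S) * R ^ n"
      unfolding Rn using CR R1 by (simp add: mult.assoc[symmetric])
    have "norm (P z - A * M z) \<le> S * R ^ n + C * R ^ (n - 1)"
      unfolding Psplit using 1 2 norm_triangle_ineq[of "(\<Sum>j\<in>{0..n} - {l}. \<alpha> j * z ^ j * cnj z ^ (n - j))" "pa_eval Q z"]
      by simp
    also have "\<dots> < norm A * R ^ n" using 3 by (simp add: algebra_simps)
    also have "\<dots> = norm (A * M z)"
      using assms(4) by (simp add: M_def norm_mult norm_power z power_add[symmetric])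
    finally show ?thesis .
  qed
  define w where "w z = P z / (A * M z)" for z
  have MR: "M z \<noteq> 0" if "norm z = R" for z using that R1 by (auto simp: M_def)
  have wre: "Re (w z) > 0" if z: "norm z = R" for z
  proof -
    have AM: "A * M z \<noteq> 0" using A0 MR[OF z] by simp
    have "w z - 1 = (P z - A * M z) / (A * M z)"
      using AM by (simp add: w_def diff_divide_distrib)
    then have "norm (w z - 1) = norm (P z - A * M z) / norm (A * M z)"
      by (simp add: norm_divide)
    also have "\<dots> < 1"
      using Ebound[OF z] AM by simp
    finally have "norm (w z - 1) < 1" .
    then have "\<bar>Re (w z - 1)\<bar> < 1" using abs_Re_le_cmod order.strict_trans1 by blast
    then show ?thesis by simp
  qed
  define G where "G u = g (of_real R * u) - Ln (w (of_real R * u)) - Ln (A * of_real R ^ n)" for u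
  have c1: "continuous_on (sphere 0 1) (\<lambda>u. P (of_real R * u))"
    by (rule continuous_on_compose2[OF contP]) (auto intro!: continuous_intros)
  have c1g: "continuous_on (sphere 0 1) (\<lambda>u. g (of_real R * u))"
    by (rule continuous_on_compose2[OF contg]) (auto intro!: continuous_intros)
  have c2: "continuous_on (sphere 0 1) (\<lambda>u. A * M (of_real R * u))"
    unfolding M_def by (intro continuous_intros)
  have contw: "continuous_on (sphere 0 1) (\<lambda>u. w (of_real R * u))"
    unfolding w_def
  proof (rule continuous_on_divide[OF c1 c2], intro ballI)
    fix u :: complex assume "u \<in> sphere 0 1"
    then have "norm (of_real R * u) = R" using R1 by (simp add: norm_mult)
    then show "A * M (of_real R * u) \<noteq> 0" using A0 MR by simp
  qed
  have nr: "w (of_real R * u) \<notin> \<real>\<^sub>\<le>\<^sub>0" if "u \<in> sphere 0 1" for u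
  proof -
    have "Re (w (of_real R * u)) > 0" using R1 that by (intro wre) (simp add: norm_mult)
    then show ?thesis by (auto simp: nonpos_Reals_def complex_is_Real_iff)
  qed
  have contG: "continuous_on (sphere 0 1) G"
    unfolding G_def
    by (intro continuous_on_diff continuous_on_const c1g continuous_on_Ln' contw nr)
  have MG: "M u = exp (G u)" if u: "u \<in> sphere 0 1" for u
  proof -
    define z where "z = of_real R * u"
    have z: "norm z = R" using u R1 by (simp add: z_def norm_mult)
    have wz: "w z \<noteq> 0" using wre[OF z] by auto
    have "exp (G u) = P z / w z / (A * of_real R ^ n)"
      using wz A0 R1 by (simp add: G_def z_def exp_diff g)
    also have "\<dots> = M z / of_real R ^ n"
      using wz A0 R1 MR[OF z] by (simp add: w_def)
    also have "\<dots> = M u"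
      using assms(4) R1 by (simp add: z_def M_def power_mult_distrib power_add[symmetric] field_simps)
    finally show ?thesis by simp
  qed
  have Minv: "M u = u ^ l * inverse u ^ (n - l)" if u: "u \<in> sphere 0 1" for u
  proof -
    have "cnj u = inverse u" using u
      by (metis complex_norm_square inverse_unique mem_sphere_0 mult.commute of_real_1 power_one)
    then show ?thesis by (simp add: M_def)
  qed
  show False
  proof (cases "2 * l > n")
    case True
    show False
    proof (rule no_log_pow_circle[of "2 * l - n" G])
      fix u :: complex assume u: "u \<in> sphere 0 1"
      then have u0: "u \<noteq> 0" by auto
      have "u ^ l = u ^ (2 * l - n) * u ^ (n - l)" using True assms(4)
        by (simp add: power_add[symmetric])
      then show "u ^ (2 * l - n) = exp (G u)"
        using MG[OF u] Minv[OF u] u0 by (simp add: power_inverse field_simps)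
    qed (use True contG in auto)
  next
    case False
    with assms(5) have lt: "2 * l < n" by auto
    show False
    proof (rule no_log_pow_circle[of "n - 2 * l" "\<lambda>u. - G u"])
      fix u :: complex assume u: "u \<in> sphere 0 1"
      then have u0: "u \<noteq> 0" by auto
      have "u ^ (n - l) = u ^ (n - 2 * l) * u ^ l" using lt
        by (simp add: power_add[symmetric])
      then have "M u = inverse (u ^ (n - 2 * l))"
        using Minv[OF u] u0 by (simp add: power_inverse field_simps)
      then show "u ^ (n - 2 * l) = exp (- G u)"
        using MG[OF u] by (simp add: exp_minus)
    qed (use lt contG in \<open>auto intro: continuous_intros\<close>)
  qed
qed

end
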